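(* Let $G=(V,A)$ be an acyclic digraph. Then $|A| \le \sqrt{2\, p_{\#}(G)}\,|V|$, where $p_{\#}(G) = \frac{1}{2}\sum_{u\in V} |d^+(u)-d^-(u)|$.
   Context: Digraphs are simple. A digraph is acyclic if it contains no directed cycle. For a vertex $u$, $d^+(u)$ and $d^-(u)$ denote its outdegree and indegree. *)

theory Defs
  imports Complex_Main
begin

definition simple_digraph :: "'a set \<Rightarrow> ('a \<times> 'a) set \<Rightarrow> bool" where
  "simple_digraph V A \<longleftrightarrow> finite V \<and> A \<subseteq> V \<times> V \<and> (\<forall>u. (u, u) \<notin> A)"

definition out_deg :: "('a \<times> 'a) set \<Rightarrow> 'a \<Rightarrow> nat" where
  "out_deg A u = card {v. (u, v) \<in> A}"

definition in_deg :: "('a \<times> 'a) set \<Rightarrow> 'a \<Rightarrow> nat" where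
  "in_deg A u = card {v. (v, u) \<in> A}"

definition p_sharp :: "'a set \<Rightarrow> ('a \<times> 'a) set \<Rightarrow> real" where
  "p_sharp V A = (1/2) * (\<Sum>u\<in>V. \<bar>real (out_deg A u) - real (in_deg A u)\<bar>)"

end

theory Submission
  imports Defs
begin

lemma topo:
  assumes "finite V" "wf A"
  shows "\<exists>pos::'a\<Rightarrow>nat. inj_on pos V \<and> (\<forall>u\<in>V. pos u < card V) \<and>
           (\<forall>u\<in>V. \<forall>v\<in>V. (u,v)\<in>A \<longrightarrow> pos u < pos v)"
  using assms(1)
proof (induction rule: finite_remove_induct)
  case empty
  then show ?case by auto
next
  case (remove W)
  obtain z where z: "z \<in> W" "\<And>y. (y,z) \<in> A \<Longrightarrow> y \<notin> W"
    using wfE_min[OF assms(2)] remove.hyps(2) by blast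
  obtain p where p: "inj_on p (W - {z})" "\<forall>u\<in>W-{z}. p u < card (W - {z})"
    "\<forall>u\<in>W-{z}. \<forall>v\<in>W-{z}. (u,v)\<in>A \<longrightarrow> p u < p v"
    using remove.IH[OF z(1)] by blast
  have cW: "card (W - {z}) = card W - 1" using z(1) remove.hyps(1) by simp
  have cW1: "card W \<ge> 1" using z(1) remove.hyps(1) card_0_eq by fastforce
  define q where "q u = (if u = z then 0 else Suc (p u))" for u
  have "inj_on q W" using p(1) unfolding q_def inj_on_def by auto
  moreover have "\<forall>u\<in>W. q u < card W"
  proof
    fix u assume u: "u \<in> W"
    show "q u < card W"
    proof (cases "u = z")
      case True then show ?thesis using cW1 unfolding q_def by simp
    next
      case False
      then have "p u < card W - 1" using p(2) cW u by auto
      then show ?thesis using False unfolding q_def by simp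
    qed
  qed
  moreover have "\<forall>u\<in>W. \<forall>v\<in>W. (u,v)\<in>A \<longrightarrow> q u < q v"
    using p(3) z(2) unfolding q_def by auto
  ultimately show ?case by blast
qed

lemma sum_distinct_pos:
  fixes S :: "nat set"
  assumes "finite S" "0 \<notin> S"
  shows "card S * (card S + 1) \<le> 2 * \<Sum>S"
  using assms
proof (induction S rule: finite_linorder_max_induct)
  case empty
  then show ?case by simp
next
  case (insert b S)
  have "\<forall>x\<in>S. 0 < x" using insert.prems by (auto intro: gr0I)
  then have "S \<subseteq> {1..<b}" using insert.hyps by (auto simp: Suc_le_eq)
  then have "card S \<le> b - 1" using card_mono[of "{1..<b}" S] by simp
  moreover have "b \<ge> 1" using insert by (cases b) auto
  moreover have "b \<notin> S" using insert by auto
  ultimately show ?case using insert by (simp add: algebra_simps)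
qed

lemma cauchy_sum:
  fixes x :: "'a \<Rightarrow> real"
  assumes "finite V"
  shows "(\<Sum>u\<in>V. x u)^2 \<le> real (card V) * (\<Sum>u\<in>V. (x u)^2)"
proof (cases "V = {}")
  case True then show ?thesis by simp
next
  case False
  define n where "n = real (card V)"
  have n: "n > 0" using False assms n_def by (simp add: card_gt_0_iff)
  define s where "s = (\<Sum>u\<in>V. x u)"
  have "0 \<le> (\<Sum>u\<in>V. (x u - s/n)^2)" by (intro sum_nonneg) auto
  also have "\<dots> = (\<Sum>u\<in>V. (x u)^2) - 2*(s/n)*s + n*(s/n)^2"
  proof -
    have "(\<Sum>u\<in>V. (x u - s/n)^2) = (\<Sum>u\<in>V. (x u)^2 - 2*(s/n)* x u + (s/n)^2)"
      by (rule sum.cong) (auto simp: power2_diff)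
    also have "\<dots> = (\<Sum>u\<in>V. (x u)^2) - 2*(s/n)*(\<Sum>u\<in>V. x u) + n*(s/n)^2"
      by (simp add: sum.distrib sum_subtractf sum_distrib_left[symmetric] sum_divide_distrib[symmetric] n_def)
    finally show ?thesis by (simp add: s_def)
  qed
  also have "\<dots> = (\<Sum>u\<in>V. (x u)^2) - s^2/n" using n by (simp add: field_simps power2_eq_square)
  finally have "s^2/n \<le> (\<Sum>u\<in>V. (x u)^2)" by simp
  then show ?thesis using n by (simp add: s_def n_def field_simps)
qed

lemma group_snd:
  fixes g :: "'a \<Rightarrow> real"
  assumes "finite V" "A \<subseteq> V \<times> V"
  shows "(\<Sum>a\<in>A. g (snd a)) = (\<Sum>v\<in>V. real (in_deg A v) * g v)"
proof -
  have fA: "finite A" using assms finite_subset by blast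
  have "(\<Sum>a\<in>A. g (snd a)) = (\<Sum>v\<in>V. \<Sum>a\<in>{a. a \<in> A \<and> snd a = v}. g (snd a))"
    using sum.group[OF fA assms(1), of snd "\<lambda>a. g (snd a)"] assms(2) by force
  also have "\<dots> = (\<Sum>v\<in>V. real (in_deg A v) * g v)"
  proof (rule sum.cong[OF refl])
    fix v assume "v \<in> V"
    have "card {a. a \<in> A \<and> snd a = v} = card {u. (u,v) \<in> A}"
      by (rule bij_betw_same_card[of fst]) (auto simp: bij_betw_def inj_on_def image_def)
    then show "(\<Sum>a\<in>{a. a \<in> A \<and> snd a = v}. g (snd a)) = real (in_deg A v) * g v"
      by (simp add: in_deg_def)
  qed
  finally show ?thesis .
qed

lemma group_fst:
  fixes g :: "'a \<Rightarrow> real"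
  assumes "finite V" "A \<subseteq> V \<times> V"
  shows "(\<Sum>a\<in>A. g (fst a)) = (\<Sum>v\<in>V. real (out_deg A v) * g v)"
proof -
  have fA: "finite A" using assms finite_subset by blast
  have "(\<Sum>a\<in>A. g (fst a)) = (\<Sum>v\<in>V. \<Sum>a\<in>{a. a \<in> A \<and> fst a = v}. g (fst a))"
    using sum.group[OF fA assms(1), of fst "\<lambda>a. g (fst a)"] assms(2) by force
  also have "\<dots> = (\<Sum>v\<in>V. real (out_deg A v) * g v)"
  proof (rule sum.cong[OF refl])
    fix v assume "v \<in> V"
    have "card {a. a \<in> A \<and> fst a = v} = card {u. (v,u) \<in> A}"
      by (rule bij_betw_same_card[of snd]) (auto simp: bij_betw_def inj_on_def image_def)
    then show "(\<Sum>a\<in>{a. a \<in> A \<and> fst a = v}. g (fst a)) = real (out_deg A v) * g v"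
      by (simp add: out_deg_def)
  qed
  finally show ?thesis .
qed


lemma out_sum:
  assumes "finite V" "A \<subseteq> V \<times> V" "inj_on pos V"
    and ord: "\<forall>u\<in>V. \<forall>v\<in>V. (u,v)\<in>A \<longrightarrow> pos u < pos v"
    and u: "u \<in> V"
  shows "real (out_deg A u) ^ 2 \<le> 2 * (\<Sum>v\<in>{v. (u,v)\<in>A}. real (pos v) - real (pos u))"
proof -
  let ?O = "{v. (u,v)\<in>A}"
  have OV: "?O \<subseteq> V" using assms(2) by auto
  have fO: "finite ?O" using finite_subset[OF OV assms(1)] .
  have lt: "\<And>v. v \<in> ?O \<Longrightarrow> pos u < pos v" using ord u OV by blast
  have "(\<Sum>v\<in>?O. real (pos v) - real (pos u)) = real (\<Sum>v\<in>?O. pos v - pos u)"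
    using lt by (simp add: of_nat_diff less_imp_le)
  moreover have inj: "inj_on (\<lambda>v. pos v - pos u) ?O"
  proof (rule inj_onI)
    fix x y assume "x \<in> ?O" "y \<in> ?O" "pos x - pos u = pos y - pos u"
    then have "pos x = pos y" using lt[of x] lt[of y] by simp
    then show "x = y" using inj_onD[OF assms(3)] \<open>x \<in> ?O\<close> \<open>y \<in> ?O\<close> OV by blast
  qed
  moreover have "(\<Sum>v\<in>?O. pos v - pos u) = \<Sum>((\<lambda>v. pos v - pos u) ` ?O)"
    using sum.reindex[OF inj, of id] by simp
  moreover have "card ((\<lambda>v. pos v - pos u) ` ?O) = out_deg A u"
    using card_image[OF inj] by (simp add: out_deg_def)
  moreover have "0 \<notin> (\<lambda>v. pos v - pos u) ` ?O" using lt by force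
  ultimately have "out_deg A u * (out_deg A u + 1) \<le> 2 * (\<Sum>v\<in>?O. pos v - pos u)"
    using sum_distinct_pos[of "(\<lambda>v. pos v - pos u) ` ?O"] fO by simp
  then have "real (out_deg A u * (out_deg A u + 1)) \<le> real (2 * (\<Sum>v\<in>?O. pos v - pos u))"
    by linarith
  then have "real (out_deg A u) ^ 2 \<le> 2 * real (\<Sum>v\<in>?O. pos v - pos u)"
    by (simp add: power2_eq_square algebra_simps)
  then show ?thesis using \<open>(\<Sum>v\<in>?O. real (pos v) - real (pos u)) = _\<close> by simp
qed

theorem proposition1p2:
  fixes V :: "'a set" and A :: "('a \<times> 'a) set"
  assumes "simple_digraph V A"
    and "acyclic A"
  shows "real (card A) \<le> sqrt (2 * p_sharp V A) * real (card V)"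
proof -
  have fV: "finite V" and AV: "A \<subseteq> V \<times> V" using assms(1) by (auto simp: simple_digraph_def)
  have fA: "finite A" using AV fV finite_subset by blast
  have wfA: "wf A" using finite_acyclic_wf[OF fA assms(2)] .
  obtain pos :: "'a \<Rightarrow> nat" where inj: "inj_on pos V" and bnd: "\<forall>u\<in>V. pos u < card V"
    and ord: "\<forall>u\<in>V. \<forall>v\<in>V. (u,v)\<in>A \<longrightarrow> pos u < pos v"
    using topo[OF fV wfA] by blast
  define n where "n = real (card V)"
  define m where "m = real (card A)"
  define p where "p = p_sharp V A"
  define f where "f v = real (in_deg A v) - real (out_deg A v)" for v
  define L where "L = (\<Sum>a\<in>A. real (pos (snd a)) - real (pos (fst a)))"
  have p_eq: "2 * p = (\<Sum>v\<in>V. \<bar>f v\<bar>)"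
    unfolding p_def p_sharp_def f_def by (simp add: abs_minus_commute)
  have "0 \<le> (\<Sum>v\<in>V. \<bar>f v\<bar>)" by (rule sum_nonneg) simp
  then have p0: "p \<ge> 0" using p_eq by linarith
  have sin: "(\<Sum>v\<in>V. real (in_deg A v)) = m"
    using group_snd[OF fV AV, of "\<lambda>_. 1"] by (simp add: m_def)
  have sout: "(\<Sum>v\<in>V. real (out_deg A v)) = m"
    using group_fst[OF fV AV, of "\<lambda>_. 1"] by (simp add: m_def)
  have f0: "(\<Sum>v\<in>V. f v) = 0" unfolding f_def using sin sout by (simp add: sum_subtractf)
  have L1: "L = (\<Sum>v\<in>V. real (pos v) * f v)"
  proof -
    have "L = (\<Sum>a\<in>A. real (pos (snd a))) - (\<Sum>a\<in>A. real (pos (fst a)))"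
      unfolding L_def by (simp add: sum_subtractf)
    also have "\<dots> = (\<Sum>v\<in>V. real (in_deg A v) * real (pos v)) - (\<Sum>v\<in>V. real (out_deg A v) * real (pos v))"
      using group_snd[OF fV AV, of "\<lambda>v. real (pos v)"] group_fst[OF fV AV, of "\<lambda>v. real (pos v)"]
      by simp
    also have "\<dots> = (\<Sum>v\<in>V. real (pos v) * f v)"
      unfolding f_def by (simp add: algebra_simps sum_subtractf)
    finally show ?thesis .
  qed
  define c where "c = (n - 1) / 2"
  have L2: "L = (\<Sum>v\<in>V. (real (pos v) - c) * f v)"
    using L1 f0 by (simp add: algebra_simps sum_subtractf sum_distrib_left[symmetric])
  have "L \<le> (\<Sum>v\<in>V. c * \<bar>f v\<bar>)"
    unfolding L2
  proof (rule sum_mono)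
    fix v assume v: "v \<in> V"
    have "pos v + 1 \<le> card V" using bnd v by auto
    then have "real (pos v) + 1 \<le> n" unfolding n_def by linarith
    moreover have "real (pos v) \<ge> 0" by simp
    ultimately have "\<bar>real (pos v) - c\<bar> \<le> c" unfolding c_def abs_le_iff by (auto simp: field_simps)
    then have "\<bar>real (pos v) - c\<bar> * \<bar>f v\<bar> \<le> c * \<bar>f v\<bar>" by (simp add: mult_right_mono)
    then show "(real (pos v) - c) * f v \<le> c * \<bar>f v\<bar>"
      by (metis abs_ge_self abs_mult order_trans)
  qed
  also have "\<dots> = c * (2 * p)" by (simp add: p_eq sum_distrib_left)
  finally have Lup: "L \<le> (n - 1) * p" unfolding c_def by simp
  have "L = (\<Sum>u\<in>V. \<Sum>a\<in>{a. a \<in> A \<and> fst a = u}. real (pos (snd a)) - real (pos (fst a)))"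
  proof -
    have "fst ` A \<subseteq> V" using AV by auto
    from sum.group[OF fA fV this, of "\<lambda>a. real (pos (snd a)) - real (pos (fst a))"]
    show ?thesis unfolding L_def by simp
  qed
  also have "\<dots> = (\<Sum>u\<in>V. \<Sum>v\<in>{v. (u,v)\<in>A}. real (pos v) - real (pos u))"
  proof (rule sum.cong[OF refl])
    fix u assume "u \<in> V"
    have b: "bij_betw (Pair u) {v. (u,v)\<in>A} {a. a \<in> A \<and> fst a = u}"
      by (auto simp: bij_betw_def inj_on_def image_def)
    show "(\<Sum>a\<in>{a. a \<in> A \<and> fst a = u}. real (pos (snd a)) - real (pos (fst a))) =
          (\<Sum>v\<in>{v. (u,v)\<in>A}. real (pos v) - real (pos u))"
      using sum.reindex_bij_betw[OF b, of "\<lambda>a. real (pos (snd a)) - real (pos (fst a))"] by simp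
  qed
  finally have L3: "L = (\<Sum>u\<in>V. \<Sum>v\<in>{v. (u,v)\<in>A}. real (pos v) - real (pos u))" .
  have Llow: "(\<Sum>u\<in>V. real (out_deg A u) ^ 2) \<le> 2 * L"
  proof -
    have "(\<Sum>u\<in>V. real (out_deg A u) ^ 2) \<le> (\<Sum>u\<in>V. 2 * (\<Sum>v\<in>{v. (u,v)\<in>A}. real (pos v) - real (pos u)))"
      by (rule sum_mono) (rule out_sum[OF fV AV inj ord])
    also have "\<dots> = 2 * L" unfolding L3 by (simp add: sum_distrib_left)
    finally show ?thesis .
  qed
  have "m ^ 2 \<le> n * (\<Sum>u\<in>V. real (out_deg A u) ^ 2)"
    using cauchy_sum[OF fV, of "\<lambda>u. real (out_deg A u)"] sout by (simp add: n_def)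
  also have "\<dots> \<le> n * (2 * ((n - 1) * p))"
    using Llow Lup by (intro mult_left_mono) (auto simp: n_def)
  also have "\<dots> \<le> n * (2 * (n * p))"
    using p0 by (intro mult_left_mono) (auto simp: n_def mult_right_mono)
  finally have "m ^ 2 \<le> (2 * p) * n ^ 2" by (simp add: power2_eq_square algebra_simps)
  then have "sqrt (m ^ 2) \<le> sqrt ((2 * p) * n ^ 2)" by (rule real_sqrt_le_mono)
  then have "m \<le> sqrt (2 * p) * n"
    by (simp add: real_sqrt_mult m_def n_def)
  then show ?thesis by (simp add: m_def n_def p_def)
qed

end
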